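(* Let $\langle \mathscr{A} \mid \mathscr{R} \rangle$ be a $C(2)$ monoid presentation and let $u$ be a relation word. Then for any $v \in \mathscr{A}^*$ we have $u \equiv_\mathscr{R} v$ if and only if there exist $n \geq 1$ and words $u = u_1, u_2, \dots, u_n = v$ such that for each $1 \leq i < n$ either $(u_i, u_{i+1}) \in \mathscr{R}$ or $(u_{i+1}, u_i) \in \mathscr{R}$.
   Context: A monoid presentation $\langle \mathscr{A} \mid \mathscr{R} \rangle$ consists of an alphabet $\mathscr{A}$ and a set $\mathscr{R} \subseteq \mathscr{A}^* \times \mathscr{A}^*$ of relations; $\equiv_\mathscr{R}$ denotes the smallest congruence on the free monoid $\mathscr{A}^*$ containing $\mathscr{R}$, and the monoid presented is $\mathscr{A}^*/\equiv_\mathscr{R}$. A relation word is a word occurring as one side of a relation in $\mathscr{R}$. A piece is a word which occurs as a factor of two distinct relation words, or in two different (possibly overlapping) positions within one relation word; by convention the empty word is always a piece. For a positive integer $n$, the presentation is $C(n)$ if no relation word can be written as a product of strictly fewer than $n$ pieces. *)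

theory Defs
  imports Main
begin

definition is_congruence :: "('a list \<times> 'a list) set \<Rightarrow> bool" where
  "is_congruence c \<longleftrightarrow> equiv UNIV c \<and>
     (\<forall>x y p q. (x, y) \<in> c \<longrightarrow> (p @ x @ q, p @ y @ q) \<in> c)"

definition cong_gen :: "('a list \<times> 'a list) set \<Rightarrow> ('a list \<times> 'a list) set" where
  "cong_gen R = \<Inter> {c. is_congruence c \<and> R \<subseteq> c}"

definition rel_words :: "('a list \<times> 'a list) set \<Rightarrow> 'a list set" where
  "rel_words R = fst ` R \<union> snd ` R"

definition occurs_at :: "'a list \<Rightarrow> 'a list \<Rightarrow> nat \<Rightarrow> bool" where
  "occurs_at x w i \<longleftrightarrow> i + length x \<le> length w \<and> take (length x) (drop i w) = x"

definition piece :: "('a list \<times> 'a list) set \<Rightarrow> 'a list \<Rightarrow> bool" where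
  "piece R x \<longleftrightarrow> x = [] \<or>
     (\<exists>w1 w2 i j. w1 \<in> rel_words R \<and> w2 \<in> rel_words R \<and>
        occurs_at x w1 i \<and> occurs_at x w2 j \<and> (w1 \<noteq> w2 \<or> i \<noteq> j))"

definition C_cond :: "nat \<Rightarrow> ('a list \<times> 'a list) set \<Rightarrow> bool" where
  "C_cond n R \<longleftrightarrow> (\<forall>w \<in> rel_words R. \<forall>ps.
     (\<forall>p \<in> set ps. piece R p) \<and> concat ps = w \<longrightarrow> n \<le> length ps)"

end

theory Submission
  imports Defs
begin

definition stepR :: "('a list \<times> 'a list) set \<Rightarrow> ('a list \<times> 'a list) set" where
  "stepR R = {(p @ x @ q, p @ y @ q) | p x y q. (x, y) \<in> R \<union> R\<inverse>}"

lemma stepR_sym: "sym (stepR R)"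
  unfolding stepR_def sym_def by blast

lemma stepR_ctx:
  assumes "(x, y) \<in> (stepR R)\<^sup>*"
  shows "(p @ x @ q, p @ y @ q) \<in> (stepR R)\<^sup>*"
  using assms
proof (induction rule: rtrancl_induct)
  case base then show ?case by simp
next
  case (step b c)
  from step(2) obtain p' x' y' q' where b: "b = p' @ x' @ q'" "c = p' @ y' @ q'"
    "(x', y') \<in> R \<union> R\<inverse>" unfolding stepR_def by blast
  have "(p @ b @ q, p @ c @ q) \<in> stepR R"
    unfolding stepR_def b
    by (rule CollectI, rule exI[of _ "p @ p'"], rule exI[of _ x'], rule exI[of _ y'],
        rule exI[of _ "q' @ q"], use b(3) in simp)
  with step(3) show ?case by (rule rtrancl_into_rtrancl)
qed

lemma cong_sub: "cong_gen R \<subseteq> (stepR R)\<^sup>*"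
proof -
  have "is_congruence ((stepR R)\<^sup>*)"
    unfolding is_congruence_def equiv_def
    using refl_rtrancl[of "stepR R"] sym_rtrancl[OF stepR_sym[of R]] trans_rtrancl[of "stepR R"]
      stepR_ctx[of _ _ R] by auto
  moreover have "R \<subseteq> (stepR R)\<^sup>*"
  proof
    fix z assume "z \<in> R"
    then obtain x y where z: "z = (x, y)" "(x,y) \<in> R" by (cases z) auto
    have "([] @ x @ [], [] @ y @ []) \<in> stepR R" unfolding stepR_def using z(2) by blast
    then show "z \<in> (stepR R)\<^sup>*" using z by auto
  qed
  ultimately show ?thesis unfolding cong_gen_def by blast
qed

lemma sub_cong: "(R \<union> R\<inverse>)\<^sup>* \<subseteq> cong_gen R"
  unfolding cong_gen_def
proof (rule Inter_greatest)
  fix c assume "c \<in> {c. is_congruence c \<and> R \<subseteq> c}"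
  then have c: "equiv UNIV c" "R \<subseteq> c" unfolding is_congruence_def by auto
  show "(R \<union> R\<inverse>)\<^sup>* \<subseteq> c"
  proof
    fix z assume "z \<in> (R \<union> R\<inverse>)\<^sup>*"
    then obtain a b where z: "z = (a,b)" "(a,b) \<in> (R \<union> R\<inverse>)\<^sup>*" by (cases z) auto
    from z(2) have "(a,b) \<in> c"
    proof (induction rule: rtrancl_induct)
      case base then show ?case using c(1) unfolding equiv_def refl_on_def by auto
    next
      case (step y w)
      have "(y, w) \<in> c" using step(2) c unfolding equiv_def sym_def by auto
      then show ?case using step(3) c(1) unfolding equiv_def trans_def by blast
    qed
    then show "z \<in> c" using z by simp
  qed
qed

lemma key:
  assumes C: "C_cond 2 R" and w: "w \<in> rel_words R" and x: "x \<in> rel_words R"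
    and eq: "w = p @ x @ q"
  shows "p = [] \<and> q = []"
proof (rule ccontr)
  assume ne: "\<not> (p = [] \<and> q = [])"
  have "piece R x"
    unfolding piece_def
  proof (rule disjI2, intro exI conjI)
    show "x \<in> rel_words R" by fact
    show "w \<in> rel_words R" by fact
    show "occurs_at x x 0" unfolding occurs_at_def by simp
    show "occurs_at x w (length p)" unfolding occurs_at_def eq by simp
    show "x \<noteq> w \<or> 0 \<noteq> length p" using ne eq by auto
  qed
  then have "2 \<le> length [x]" using C x unfolding C_cond_def
    by (metis concat.simps(1) concat.simps(2) append_Nil2 empty_iff list.set(1) set_ConsD)
  then show False by simp
qed

lemma rw_pair: "(x, y) \<in> R \<Longrightarrow> x \<in> rel_words R \<and> y \<in> rel_words R"
  unfolding rel_words_def by force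

lemma reach_rel:
  assumes "(u, w) \<in> (R \<union> R\<inverse>)\<^sup>*" "u \<in> rel_words R"
  shows "w \<in> rel_words R"
  using assms
  by (induction rule: rtrancl_induct) (auto dest: rw_pair)

lemma forward:
  assumes C: "C_cond 2 R" and u: "u \<in> rel_words R" and "(u, v) \<in> (stepR R)\<^sup>*"
  shows "(u, v) \<in> (R \<union> R\<inverse>)\<^sup>*"
  using assms(3)
proof (induction rule: rtrancl_induct)
  case base then show ?case by simp
next
  case (step b c)
  from step(2) obtain p x y q where b: "b = p @ x @ q" "c = p @ y @ q"
    "(x, y) \<in> R \<union> R\<inverse>" unfolding stepR_def by blast
  have brel: "b \<in> rel_words R" using reach_rel[OF step(3) u] .
  have xrel: "x \<in> rel_words R" using b(3) by (auto dest: rw_pair)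
  from key[OF C brel xrel b(1)] have "p = []" "q = []" by auto
  with b have "(b, c) \<in> R \<union> R\<inverse>" by simp
  with step(3) show ?case by (rule rtrancl_into_rtrancl)
qed

lemma chain_to_rtrancl:
  "us \<noteq> [] \<Longrightarrow> (\<forall>i. Suc i < length us \<longrightarrow> (us ! i, us ! Suc i) \<in> Q)
   \<Longrightarrow> (hd us, last us) \<in> Q\<^sup>*"
proof (induction us)
  case Nil then show ?case by simp
next
  case (Cons a us)
  show ?case
  proof (cases "us = []")
    case True then show ?thesis by simp
  next
    case False
    have h0: "(a, hd us) \<in> Q" using Cons.prems(2)[rule_format, of 0] False
      by (simp add: hd_conv_nth)
    have "\<forall>i. Suc i < length us \<longrightarrow> (us ! i, us ! Suc i) \<in> Q"
      using Cons.prems(2) by (metis length_Cons nth_Cons_Suc Suc_less_eq)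
    then have "(hd us, last us) \<in> Q\<^sup>*" using Cons.IH False by simp
    with h0 False show ?thesis by simp
  qed
qed

lemma rtrancl_to_chain:
  assumes "(a, b) \<in> Q\<^sup>*"
  shows "\<exists>us. length us \<ge> 1 \<and> hd us = a \<and> last us = b \<and>
       (\<forall>i. Suc i < length us \<longrightarrow> (us ! i, us ! Suc i) \<in> Q)"
  using assms
proof (induction rule: rtrancl_induct)
  case base then show ?case by (intro exI[of _ "[a]"]) simp
next
  case (step y z)
  then obtain us where us: "length us \<ge> 1" "hd us = a" "last us = y"
    "\<forall>i. Suc i < length us \<longrightarrow> (us ! i, us ! Suc i) \<in> Q" by blast
  have ne: "us \<noteq> []" using us(1) by auto
  show ?case
  proof (intro exI[of _ "us @ [z]"] conjI allI impI)
    show "1 \<le> length (us @ [z])" by simp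
    show "hd (us @ [z]) = a" using ne us(2) by simp
    show "last (us @ [z]) = z" by simp
    fix i assume i: "Suc i < length (us @ [z])"
    show "((us @ [z]) ! i, (us @ [z]) ! Suc i) \<in> Q"
    proof (cases "Suc i < length us")
      case True then show ?thesis using us(4) by (simp add: nth_append)
    next
      case False
      then have "i = length us - 1" using i by simp
      then show ?thesis using ne us(3) step(2)
        by (simp add: nth_append last_conv_nth)
    qed
  qed
qed

theorem proposition3:
  fixes R :: "('a list \<times> 'a list) set" and u v :: "'a list"
  assumes "C_cond 2 R" and "u \<in> rel_words R"
  shows "(u, v) \<in> cong_gen R \<longleftrightarrow>
    (\<exists>us. length us \<ge> 1 \<and> hd us = u \<and> last us = v \<and>
       (\<forall>i. Suc i < length us \<longrightarrow>
          (us ! i, us ! Suc i) \<in> R \<or> (us ! Suc i, us ! i) \<in> R))"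
proof
  assume "(u, v) \<in> cong_gen R"
  then have "(u, v) \<in> (R \<union> R\<inverse>)\<^sup>*" using forward[OF assms] cong_sub by blast
  from rtrancl_to_chain[OF this] show "\<exists>us. length us \<ge> 1 \<and> hd us = u \<and> last us = v \<and>
       (\<forall>i. Suc i < length us \<longrightarrow>
          (us ! i, us ! Suc i) \<in> R \<or> (us ! Suc i, us ! i) \<in> R)" by auto
next
  assume "\<exists>us. length us \<ge> 1 \<and> hd us = u \<and> last us = v \<and>
       (\<forall>i. Suc i < length us \<longrightarrow>
          (us ! i, us ! Suc i) \<in> R \<or> (us ! Suc i, us ! i) \<in> R)"
  then obtain us where us: "length us \<ge> 1" "hd us = u" "last us = v"
    "\<forall>i. Suc i < length us \<longrightarrow> (us ! i, us ! Suc i) \<in> R \<union> R\<inverse>" by auto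
  have "(u, v) \<in> (R \<union> R\<inverse>)\<^sup>*"
    using chain_to_rtrancl[of us "R \<union> R\<inverse>"] us by (cases us) auto
  then show "(u, v) \<in> cong_gen R" using sub_cong by blast
qed

end
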